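(* Let $\alpha,\beta,\eta\in\mathbb{C}$. (1)(i) For $TSV(a,b)$ with $(a,b)\neq(1,0)$ and $\alpha\neq0$, a nontrivial extension $0\to M_{\alpha,\beta}\to E\to\mathbb{C}c_\eta\to0$ exists iff $\beta+\eta=0$ and $\alpha=1$. In this case $\dim\mathrm{Ext}(\mathbb{C}c_{-\beta},M_{1,\beta})=1$ and every nontrivial extension is equivalent to $E=\mathbb{C}[\partial]v\oplus\mathbb{C}c_\eta$ with $L_\lambda c_\eta=kv$, $Y_\lambda c_\eta=M_\lambda c_\eta=0$, $\partial c_\eta=\eta c_\eta+kv$ for some $k\neq0$. (1)(ii) For $TSV(1,0)$ and $(\alpha,\gamma)\neq(0,0)$, a nontrivial extension $0\to M_{\alpha,\beta,\gamma}\to E\to\mathbb{C}c_\eta\to0$ exists iff $\beta+\eta=0$ and $(\alpha,\gamma)=(1,0)$. In this case $\dim\mathrm{Ext}(\mathbb{C}c_{-\beta},M_{1,\beta,0})=1$ and every nontrivial extension is equivalent to the one with $L_\lambda c_\eta=kv$, $Y_\lambda c_\eta=M_\lambda c_\eta=0$, $\partial c_\eta=\eta c_\eta+kv$ for some $k\neq0$. (2) For $TSV(c)$ and $\alpha\neq0$, a nontrivial extension $0\to M_{\alpha,\beta}\to E\to\mathbb{C}c_\eta\to0$ exists iff $\beta+\eta=0$ and $\alpha=1$. In this case $\dim\mathrm{Ext}(\mathbb{C}c_{-\beta},M_{1,\beta})=1$ and every nontrivial extension is equivalent to the one with $L_\lambda c_\eta=kv$, $Y_\lambda c_\eta=M_\lambda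 c_\eta=0$, $\partial c_\eta=\eta c_\eta+kv$ for some $k\neq0$.
   Context: A conformal module over a Lie conformal algebra $\mathcal{R}$ is a $\mathbb{C}[\partial]$-module $V$ with $\mathbb{C}$-linear maps $a\otimes v\mapsto a_\lambda v\in V[\lambda]$ such that $(\partial a)_\lambda v=-\lambda a_\lambda v$, $a_\lambda(\partial v)=(\partial+\lambda)a_\lambda v$, and $a_\lambda(b_\mu v)-b_\mu(a_\lambda v)=[a_\lambda b]_{\lambda+\mu}v$. $TSV(a,b)$ ($a,b\in\mathbb{C}$) is the free $\mathbb{C}[\partial]$-module on $L,Y,M$ with $[L_\lambda L]=(\partial+2\lambda)L$, $[L_\lambda Y]=(\partial+a\lambda+b)Y$, $[L_\lambda M]=(\partial+2(a-1)\lambda+2b)M$, $[Y_\lambda Y]=(\partial+2\lambda)M$, $[Y_\lambda M]=[M_\lambda M]=0$. $TSV(c)$ ($c\in\mathbb{C}$) is the free $\mathbb{C}[\partial]$-module on $L,Y,M$ with $[L_\lambda L]=(\partial+2\lambda)L$, $[L_\lambda Y]=(\partial+\frac32\lambda+c)Y$, $[L_\lambda M]=(\partial+2c)M$, $[Y_\lambda Y]=(\partial+2\lambda)(-\partial-2c)M$, $[Y_\lambda M]=[M_\lambda M]=0$. For $TSV(a,b)$ with $(a,b)\neq(1,0)$ and for $TSV(c)$, $M_{\alpha,\beta}=\mathbb{C}[\partial]v$ ($\alpha\neq0$) has $L_\lambda v=(\partial+\alpha\lambda+\beta)v$, $Y_\lambda v=M_\lambda v=0$. For $TSV(1,0)$,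 $M_{\alpha,\beta,\gamma}=\mathbb{C}[\partial]v$ ($(\alpha,\gamma)\neq(0,0)$) has $L_\lambda v=(\partial+\alpha\lambda+\beta)v$, $Y_\lambda v=\gamma v$, $M_\lambda v=0$. $\mathbb{C}c_\eta$ is the one-dimensional module with $\partial c_\eta=\eta c_\eta$ and all $\lambda$-actions zero. An extension $0\to V\to E\to W\to0$ is an exact sequence of modules; equivalence means a module homomorphism between middle terms compatible with the identities on the end terms; trivial means equivalent to the direct sum extension; $\mathrm{Ext}(W,V)$ is the vector space of equivalence classes of extensions of $W$ by $V$. *)

theory Defs
  imports "HOL-Computational_Algebra.Polynomial" "HOL-Library.Product_Plus"
begin

text \<open>The three algebras are free C[d]-modules on generators L, Y, M.\<close>
datatype gen = Lg | Yg | Mg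

text \<open>Elements of V[lambda]
  are represented by their evaluations at all lambda, together with the requirement
  that they are polynomial in lambda.\<close>
record 'v cmod =
  smul :: "complex \<Rightarrow> 'v \<Rightarrow> 'v"
  dop  :: "'v \<Rightarrow> 'v"
  lact :: "gen \<Rightarrow> complex \<Rightarrow> 'v \<Rightarrow> 'v"

text \<open>A lambda-bracket of generators: if [X_l Z] = sum_G p_G(d,l) G then
  br X Z l n G = p_G(-n, l), i.e. the coefficient with d replaced by -n, which is
  how it acts when applied with parameter n: (p(d,l) G)_n w = p(-n,l) G_n w.\<close>
type_synonym bracket = "gen \<Rightarrow> gen \<Rightarrow> complex \<Rightarrow> complex \<Rightarrow> gen \<Rightarrow> complex"

fun gen_rank :: "gen \<Rightarrow> nat" where
  "gen_rank Lg = 0" | "gen_rank Yg = 1" | "gen_rank Mg = 2"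

text \<open>Extend brackets given for pairs (X,Z) with rank X <= rank Z to all pairs by
  skew-symmetry [Z_m X] = -[X_{-m-d} Z].\<close>
definition skew_extend :: "bracket \<Rightarrow> bracket" where
  "skew_extend base X Z l n G =
     (if gen_rank X \<le> gen_rank Z then base X Z l n G else - base Z X (n - l) n G)"

definition tsv_ab_base :: "complex \<Rightarrow> complex \<Rightarrow> bracket" where
  "tsv_ab_base a b X Z l n G =
    (case (X, Z) of
       (Lg, Lg) \<Rightarrow> (if G = Lg then - n + 2 * l else 0)
     | (Lg, Yg) \<Rightarrow> (if G = Yg then - n + a * l + b else 0)
     | (Lg, Mg) \<Rightarrow> (if G = Mg then - n + 2 * (a - 1) * l + 2 * b else 0)
     | (Yg, Yg) \<Rightarrow> (if G = Mg then - n + 2 * l else 0)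
     | _ \<Rightarrow> 0)"

definition TSV_ab :: "complex \<Rightarrow> complex \<Rightarrow> bracket" where
  "TSV_ab a b = skew_extend (tsv_ab_base a b)"

definition tsv_c_base :: "complex \<Rightarrow> bracket" where
  "tsv_c_base c X Z l n G =
    (case (X, Z) of
       (Lg, Lg) \<Rightarrow> (if G = Lg then - n + 2 * l else 0)
     | (Lg, Yg) \<Rightarrow> (if G = Yg then - n + 3 / 2 * l + c else 0)
     | (Lg, Mg) \<Rightarrow> (if G = Mg then - n + 2 * c else 0)
     | (Yg, Yg) \<Rightarrow> (if G = Mg then (- n + 2 * l) * (n - 2 * c) else 0)
     | _ \<Rightarrow> 0)"

definition TSV_c :: "complex \<Rightarrow> bracket" where
  "TSV_c c = skew_extend (tsv_c_base c)"

definition vec_space :: "('v::ab_group_add) cmod \<Rightarrow> bool" where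
  "vec_space V \<longleftrightarrow>
     (\<forall>a x y. smul V a (x + y) = smul V a x + smul V a y) \<and>
     (\<forall>a b x. smul V (a + b) x = smul V a x + smul V b x) \<and>
     (\<forall>a b x. smul V a (smul V b x) = smul V (a * b) x) \<and>
     (\<forall>x. smul V 1 x = x)"

definition clin :: "('v::ab_group_add) cmod \<Rightarrow> ('w::ab_group_add) cmod \<Rightarrow> ('v \<Rightarrow> 'w) \<Rightarrow> bool" where
  "clin V W f \<longleftrightarrow> (\<forall>x y. f (x + y) = f x + f y) \<and> (\<forall>a x. f (smul V a x) = smul W a (f x))"

definition poly_in_lambda :: "('v::ab_group_add) cmod \<Rightarrow> (complex \<Rightarrow> 'v) \<Rightarrow> bool" where
  "poly_in_lambda V h \<longleftrightarrow> (\<exists>(n::nat) c. \<forall>l. h l = (\<Sum>i\<le>n. smul V (l ^ i) (c i)))"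

text \<open>Conformal module over the algebra with bracket br (actions of generators;
  the action of a general element p(d)X is p(-l) X_l, which builds in (d a)_l = -l a_l).\<close>
definition conf_module :: "bracket \<Rightarrow> ('v::ab_group_add) cmod \<Rightarrow> bool" where
  "conf_module br V \<longleftrightarrow>
     vec_space V \<and> clin V V (dop V) \<and> (\<forall>X l. clin V V (lact V X l)) \<and>
     (\<forall>X w. poly_in_lambda V (\<lambda>l. lact V X l w)) \<and>
     (\<forall>X l w. lact V X l (dop V w) = dop V (lact V X l w) + smul V l (lact V X l w)) \<and>
     (\<forall>X Z l m w.
        lact V X l (lact V Z m w) - lact V Z m (lact V X l w) =
          smul V (br X Z l (l + m) Lg) (lact V Lg (l + m) w) +
          smul V (br X Z l (l + m) Yg) (lact V Yg (l + m) w) +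
          smul V (br X Z l (l + m) Mg) (lact V Mg (l + m) w))"

definition chom :: "('v::ab_group_add) cmod \<Rightarrow> ('w::ab_group_add) cmod \<Rightarrow> ('v \<Rightarrow> 'w) \<Rightarrow> bool" where
  "chom V W f \<longleftrightarrow> clin V W f \<and> (\<forall>w. f (dop V w) = dop W (f w)) \<and>
     (\<forall>X l w. f (lact V X l w) = lact W X l (f w))"

definition is_ext :: "bracket \<Rightarrow> ('v::ab_group_add) cmod \<Rightarrow> ('w::ab_group_add) cmod \<Rightarrow>
    ('e::ab_group_add) cmod \<Rightarrow> ('v \<Rightarrow> 'e) \<Rightarrow> ('e \<Rightarrow> 'w) \<Rightarrow> bool" where
  "is_ext br V W E i p \<longleftrightarrow> conf_module br E \<and> chom V E i \<and> chom E W p \<and>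
     inj i \<and> surj p \<and> range i = {x. p x = 0}"

definition ext_equiv :: "('e::ab_group_add) cmod \<Rightarrow> ('v \<Rightarrow> 'e) \<Rightarrow> ('e \<Rightarrow> 'w) \<Rightarrow>
    ('f::ab_group_add) cmod \<Rightarrow> ('v \<Rightarrow> 'f) \<Rightarrow> ('f \<Rightarrow> 'w) \<Rightarrow> bool" where
  "ext_equiv E i p F j q \<longleftrightarrow>
     (\<exists>\<phi>. chom E F \<phi> \<and> (\<forall>x. \<phi> (i x) = j x) \<and> (\<forall>y. q (\<phi> y) = p y))"

definition dsum :: "('v::ab_group_add) cmod \<Rightarrow> ('w::ab_group_add) cmod \<Rightarrow> ('v \<times> 'w) cmod" where
  "dsum V W = \<lparr> smul = (\<lambda>a (x, y). (smul V a x, smul W a y)),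
                dop = (\<lambda>(x, y). (dop V x, dop W y)),
                lact = (\<lambda>X l (x, y). (lact V X l x, lact W X l y)) \<rparr>"

definition trivial_ext :: "('v::ab_group_add) cmod \<Rightarrow> ('w::ab_group_add) cmod \<Rightarrow>
    ('e::ab_group_add) cmod \<Rightarrow> ('v \<Rightarrow> 'e) \<Rightarrow> ('e \<Rightarrow> 'w) \<Rightarrow> bool" where
  "trivial_ext V W E i p \<longleftrightarrow> ext_equiv E i p (dsum V W) (\<lambda>x. (x, 0)) snd"

text \<open>M_{alpha,beta,gamma} = C[d]v, an element p(d)v is represented by the polynomial p.
  L_l v = (d + alpha l + beta) v, Y_l v = gamma v, M_l v = 0.
  M_{alpha,beta} is the case gamma = 0.\<close>
definition Mmod :: "complex \<Rightarrow> complex \<Rightarrow> complex \<Rightarrow> complex poly cmod" where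
  "Mmod \<alpha> \<beta> \<gamma> = \<lparr> smul = smult, dop = pCons 0,
     lact = (\<lambda>X l p. case X of
               Lg \<Rightarrow> pcompose p [:l, 1:] * [:\<alpha> * l + \<beta>, 1:]
             | Yg \<Rightarrow> smult \<gamma> (pcompose p [:l, 1:])
             | Mg \<Rightarrow> 0) \<rparr>"

definition Cmod :: "complex \<Rightarrow> complex cmod" where
  "Cmod \<eta> = \<lparr> smul = (*), dop = (\<lambda>x. \<eta> * x), lact = (\<lambda>X l x. 0) \<rparr>"

text \<open>E = C[d]v (+) C c_eta with d c_eta = eta c_eta + k v, L_l c_eta = k v,
  Y_l c_eta = M_l c_eta = 0; (p, x) stands for p(d)v + x c_eta.\<close>
definition Ek :: "complex \<Rightarrow> complex \<Rightarrow> complex \<Rightarrow> complex \<Rightarrow> complex \<Rightarrow> (complex poly \<times> complex) cmod" where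
  "Ek \<alpha> \<beta> \<gamma> \<eta> k = \<lparr> smul = (\<lambda>a (p, x). (smult a p, a * x)),
     dop = (\<lambda>(p, x). (pCons 0 p + [:k * x:], \<eta> * x)),
     lact = (\<lambda>X l (p, x). case X of
               Lg \<Rightarrow> (pcompose p [:l, 1:] * [:\<alpha> * l + \<beta>, 1:] + [:k * x:], 0)
             | Yg \<Rightarrow> (smult \<gamma> (pcompose p [:l, 1:]), 0)
             | Mg \<Rightarrow> (0, 0)) \<rparr>"

definition incl :: "complex poly \<Rightarrow> complex poly \<times> complex" where
  "incl p = (p, 0)"

end

theory Submission
  imports Defs
begin

definition polyL :: "(complex \<Rightarrow> complex poly) \<Rightarrow> bool" where
  "polyL h \<longleftrightarrow> (\<exists>Q :: complex poly poly. \<forall>l. h l = poly Q [:l:])"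

lemma const_pow_mult: "[:l:] ^ i * c = smult (l ^ i) (c :: complex poly)"
  by (induct i) (auto simp: smult_conv_map_poly[symmetric] mult.assoc)

lemma poly_Q_sum: "poly (Q :: complex poly poly) [:l:] = (\<Sum>i\<le>degree Q. smult (l ^ i) (coeff Q i))"
  unfolding poly_altdef by (rule sum.cong) (simp_all add: const_pow_mult[symmetric] mult.commute)

lemma polyL_const: "polyL (\<lambda>l. c)"
  unfolding polyL_def by (rule exI[of _ "[:c:]"]) simp

lemma polyL_add: "polyL f \<Longrightarrow> polyL g \<Longrightarrow> polyL (\<lambda>l. f l + g l)"
  unfolding polyL_def by (metis poly_add)

lemma polyL_mult: "polyL f \<Longrightarrow> polyL g \<Longrightarrow> polyL (\<lambda>l. f l * g l)"
  unfolding polyL_def by (metis poly_mult)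

lemma polyL_lin: "polyL (\<lambda>l. [:l + a, 1:])"
  unfolding polyL_def
  by (rule exI[of _ "[:[:a,1:], 1:]"]) (simp add: one_pCons)

lemma polyL_lin0: "polyL (\<lambda>l. [:l, 1:])"
  using polyL_lin[of 0] by simp

lemma polyL_pcomp: "polyL (\<lambda>l. pcompose p [:l, 1:])"
proof (induct p)
  case 0 then show ?case using polyL_const[of 0] by simp
next
  case (pCons a p)
  show ?case unfolding pcompose_pCons
    by (intro polyL_add polyL_mult polyL_const polyL_lin0 pCons(2))
qed

lemma incl_eq: "incl = (\<lambda>x. (x, 0))"
  by (simp add: fun_eq_iff incl_def)

lemma Ek0: "Ek \<alpha> \<beta> \<gamma> \<eta> 0 = dsum (Mmod \<alpha> \<beta> \<gamma>) (Cmod \<eta>)"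
  unfolding Ek_def dsum_def Mmod_def Cmod_def
  by (auto simp: fun_eq_iff split: gen.splits)

lemma Ek_uniq:
  assumes "ext_equiv (Ek \<alpha> \<beta> \<gamma> \<eta> k) incl snd (Ek \<alpha> \<beta> \<gamma> \<eta> k') incl snd"
  shows "k = k'"
proof -
  obtain \<phi> where ch: "chom (Ek \<alpha> \<beta> \<gamma> \<eta> k) (Ek \<alpha> \<beta> \<gamma> \<eta> k') \<phi>"
    and inc: "\<And>x. \<phi> (incl x) = incl x" and sn: "\<And>y. snd (\<phi> y) = snd y"
    using assms unfolding ext_equiv_def by blast
  obtain q s where qs: "\<phi> (0, 1) = (q, s)" by (cases "\<phi> (0,1)") auto
  have s1: "s = 1" using sn[of "(0,1)"] qs by simp
  have add: "\<And>x y. \<phi> (x + y) = \<phi> x + \<phi> y" and sm: "\<And>a x. \<phi> (smul (Ek \<alpha> \<beta> \<gamma> \<eta> k) a x) = smul (Ek \<alpha> \<beta> \<gamma> \<eta> k') a (\<phi> x)"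
    and dp: "\<And>w. \<phi> (dop (Ek \<alpha> \<beta> \<gamma> \<eta> k) w) = dop (Ek \<alpha> \<beta> \<gamma> \<eta> k') (\<phi> w)"
    using ch unfolding chom_def clin_def by auto
  have "\<phi> (0, \<eta>) = (smult \<eta> q, \<eta>)"
    using sm[of \<eta> "(0,1)"] qs s1 by (simp add: Ek_def)
  moreover have "\<phi> ([:k:], \<eta>) = \<phi> ([:k:], 0) + \<phi> (0, \<eta>)" using add[of "([:k:],0)" "(0,\<eta>)"] by simp
  moreover have "\<phi> ([:k:], 0) = ([:k:], 0)" using inc[of "[:k:]"] by (simp add: incl_def)
  moreover have "\<phi> ([:k:], \<eta>) = (pCons 0 q + [:k':], \<eta>)"
    using dp[of "(0,1)"] qs s1 by (simp add: Ek_def)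
  ultimately have "[:k:] + smult \<eta> q = pCons 0 q + [:k':]" by simp
  hence "poly ([:k:] + smult \<eta> q) \<eta> = poly (pCons 0 q + [:k':]) \<eta>" by simp
  thus ?thesis by (simp add: algebra_simps)
qed

lemma Ek_vec: "vec_space (Ek \<alpha> \<beta> \<gamma> \<eta> k)"
  unfolding vec_space_def Ek_def by (auto simp: algebra_simps smult_add_left smult_add_right)

lemma Ek_clin_dop: "clin (Ek \<alpha> \<beta> \<gamma> \<eta> k) (Ek \<alpha> \<beta> \<gamma> \<eta> k) (dop (Ek \<alpha> \<beta> \<gamma> \<eta> k))"
  unfolding clin_def Ek_def by (auto simp: algebra_simps smult_add_right)

lemma Ek_clin_lact: "clin (Ek \<alpha> \<beta> \<gamma> \<eta> k) (Ek \<alpha> \<beta> \<gamma> \<eta> k) (lact (Ek \<alpha> \<beta> \<gamma> \<eta> k) X l)"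
  unfolding clin_def Ek_def
  by (auto simp: algebra_simps smult_add_right pcompose_add pcompose_smult split: gen.splits)

lemma Ek_poly_aux:
  assumes "polyL h" shows "poly_in_lambda (Ek \<alpha> \<beta> \<gamma> \<eta> k) (\<lambda>l. (h l, 0))"
proof -
  obtain Q where Q: "\<And>l. h l = poly Q [:l:]" using assms unfolding polyL_def by blast
  show ?thesis unfolding poly_in_lambda_def
  proof (intro exI allI)
    fix l
    show "(h l, 0) = (\<Sum>i\<le>degree Q. smul (Ek \<alpha> \<beta> \<gamma> \<eta> k) (l ^ i) (coeff Q i, 0))"
      by (simp add: Ek_def Q poly_Q_sum sum_prod)
  qed
qed

lemma Ek_poly: "poly_in_lambda (Ek \<alpha> \<beta> \<gamma> \<eta> k) (\<lambda>l. lact (Ek \<alpha> \<beta> \<gamma> \<eta> k) X l w)"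
proof -
  obtain p x where w: "w = (p, x)" by (cases w)
  have "polyL (\<lambda>l. pcompose p [:l, 1:] * [:\<alpha> * l + \<beta>, 1:] + [:k * x:])"
  proof -
    have "polyL (\<lambda>l. [:\<alpha> * l + \<beta>, 1:])" unfolding polyL_def
      by (rule exI[of _ "[:[:\<beta>,1:], [:\<alpha>:]:]"]) (simp add: algebra_simps)
    thus ?thesis by (intro polyL_add polyL_mult polyL_pcomp polyL_const)
  qed
  moreover have "polyL (\<lambda>l. smult \<gamma> (pcompose p [:l, 1:]))"
    using polyL_mult[OF polyL_const[of "[:\<gamma>:]"] polyL_pcomp[of p]] by simp
  ultimately show ?thesis using polyL_const[of 0] Ek_poly_aux
    by (cases X) (auto simp: w Ek_def)
qed

lemma Ek_dop:
  "lact (Ek 1 \<beta> 0 (-\<beta>) k) X l (dop (Ek 1 \<beta> 0 (-\<beta>) k) w) =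
   dop (Ek 1 \<beta> 0 (-\<beta>) k) (lact (Ek 1 \<beta> 0 (-\<beta>) k) X l w) + smul (Ek 1 \<beta> 0 (-\<beta>) k) l (lact (Ek 1 \<beta> 0 (-\<beta>) k) X l w)"
proof -
  obtain p x where w: "w = (p, x)" by (cases w)
  define A where "A = pcompose p [:l, 1:] * [:l + \<beta>, 1:]"
  have 1: "pcompose (pCons 0 p + [:k * x:]) [:l, 1:] * [:l + \<beta>, 1:] + [:k * x:] * [:-\<beta>:]
     = pCons 0 (A + [:k * x:]) + smult l (A + [:k * x:])"
    unfolding A_def poly_eq_poly_eq_iff[symmetric]
    by (simp add: fun_eq_iff poly_pcompose algebra_simps)
  show ?thesis
    by (cases X) (simp_all add: w Ek_def poly_eq_poly_eq_iff[symmetric] fun_eq_iff poly_pcompose algebra_simps)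
qed

lemma Ek_jac:
  assumes hLL: "\<And>l n. br Lg Lg l n Lg = - n + 2 * l"
    and h0: "\<And>X Z l n. (X, Z) \<noteq> (Lg, Lg) \<Longrightarrow> br X Z l n Lg = 0"
  shows "lact (Ek 1 \<beta> 0 (-\<beta>) k) X l (lact (Ek 1 \<beta> 0 (-\<beta>) k) Z m w) - lact (Ek 1 \<beta> 0 (-\<beta>) k) Z m (lact (Ek 1 \<beta> 0 (-\<beta>) k) X l w) =
          smul (Ek 1 \<beta> 0 (-\<beta>) k) (br X Z l (l + m) Lg) (lact (Ek 1 \<beta> 0 (-\<beta>) k) Lg (l + m) w) +
          smul (Ek 1 \<beta> 0 (-\<beta>) k) (br X Z l (l + m) Yg) (lact (Ek 1 \<beta> 0 (-\<beta>) k) Yg (l + m) w) +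
          smul (Ek 1 \<beta> 0 (-\<beta>) k) (br X Z l (l + m) Mg) (lact (Ek 1 \<beta> 0 (-\<beta>) k) Mg (l + m) w)"
proof -
  obtain p x where w: "w = (p, x)" by (cases w)
  show ?thesis
  proof (cases "(X, Z) = (Lg, Lg)")
    case True
    then show ?thesis
      by (simp add: w Ek_def hLL poly_eq_poly_eq_iff[symmetric] fun_eq_iff poly_pcompose algebra_simps)
  next
    case False
    then show ?thesis using h0[OF False]
      by (cases X; cases Z) (simp_all add: w Ek_def zero_prod_def)
  qed
qed

lemma Ek_ext:
  assumes hLL: "\<And>l n. br Lg Lg l n Lg = - n + 2 * l"
    and h0: "\<And>X Z l n. (X, Z) \<noteq> (Lg, Lg) \<Longrightarrow> br X Z l n Lg = 0"
  shows "is_ext br (Mmod 1 \<beta> 0) (Cmod (-\<beta>)) (Ek 1 \<beta> 0 (-\<beta>) k) incl snd"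
proof -
  have cm: "conf_module br (Ek 1 \<beta> 0 (-\<beta>) k)"
    unfolding conf_module_def
    apply (intro conjI allI Ek_vec Ek_clin_dop Ek_clin_lact Ek_poly Ek_dop)
    apply (rule Ek_jac)
    using hLL h0 by auto
  have c1: "chom (Mmod 1 \<beta> 0) (Ek 1 \<beta> 0 (-\<beta>) k) incl"
    unfolding chom_def clin_def by (auto simp: incl_def Mmod_def Ek_def split: gen.splits)
  have c2: "chom (Ek 1 \<beta> 0 (-\<beta>) k) (Cmod (-\<beta>)) snd"
    unfolding chom_def clin_def by (auto simp: Cmod_def Ek_def split: gen.splits)
  have "inj incl" by (simp add: inj_def incl_def)
  moreover have "surj (snd :: complex poly \<times> complex \<Rightarrow> complex)" by (metis snd_conv surjI)
  moreover have "range incl = {x. snd x = 0}" by (auto simp: incl_def image_def)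
  ultimately show ?thesis using cm c1 c2 unfolding is_ext_def by blast
qed

lemma brab: "TSV_ab a b Lg Lg l n Lg = - n + 2 * l"
  "(X, Z) \<noteq> (Lg, Lg) \<Longrightarrow> TSV_ab a b X Z l n Lg = 0"
  by (cases X; cases Z; simp add: TSV_ab_def skew_extend_def tsv_ab_base_def)+

lemma brc: "TSV_c c Lg Lg l n Lg = - n + 2 * l"
  "(X, Z) \<noteq> (Lg, Lg) \<Longrightarrow> TSV_c c X Z l n Lg = 0"
  by (cases X; cases Z; simp add: TSV_c_def skew_extend_def tsv_c_base_def)+

definition Gk :: "complex \<Rightarrow> gen \<Rightarrow> complex poly" where
  "Gk k X = (case X of Lg \<Rightarrow> [:k:] | _ \<Rightarrow> 0)"

lemma Ek_lact_form:
  "lact (Ek \<alpha> \<beta> \<gamma> \<eta> k) X l (q, s) = (lact (Mmod \<alpha> \<beta> \<gamma>) X l q + smult s (Gk k X), 0)"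
  by (cases X) (simp_all add: Ek_def Mmod_def Gk_def mult.commute)

lemma Ek_dop_form:
  "dop (Ek \<alpha> \<beta> \<gamma> \<eta> k) (q, s) = (pCons 0 q + smult s [:k:], \<eta> * s)"
  by (simp add: Ek_def mult.commute)

lemma Ek_smul_form: "smul (Ek \<alpha> \<beta> \<gamma> \<eta> k) a (q, s) = (smult a q, a * s)"
  by (simp add: Ek_def)

lemma add_diff_hom:
  fixes f :: "'a::ab_group_add \<Rightarrow> 'b::ab_group_add"
  assumes "\<And>x y. f (x + y) = f x + f y"
  shows "f (x - y) = f x - (f y :: 'b::ab_group_add)"
proof -
  have "f x = f (x - y) + f y" using assms[of "x - y" y] by simp
  thus ?thesis by (simp add: algebra_simps)
qed

lemma add_zero_hom:
  fixes f :: "'a::ab_group_add \<Rightarrow> 'b::ab_group_add"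
  assumes "\<And>x y. f (x + y) = f x + f y"
  shows "f 0 = (0 :: 'b::ab_group_add)"
  using add_diff_hom[of f 0 0, OF assms] by simp

lemma lin_fact:
  fixes g :: "complex poly"
  assumes "[:l - \<eta>, 1:] * g = h"
  shows "poly h (\<eta> - l) = 0"
  using assms[symmetric] by (simp add: algebra_simps)

lemma main:
  fixes E :: "'e::ab_group_add cmod" and i :: "complex poly \<Rightarrow> 'e" and p
  assumes ext: "is_ext br (Mmod \<alpha> \<beta> \<gamma>) (Cmod \<eta>) E i p"
  shows "\<exists>k. ext_equiv E i p (Ek \<alpha> \<beta> \<gamma> \<eta> k) incl snd \<and> (k \<noteq> 0 \<longrightarrow> \<alpha> = 1 \<and> \<beta> + \<eta> = 0 \<and> \<gamma> = 0)"
proof -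
  have cm: "conf_module br E" and ci: "chom (Mmod \<alpha> \<beta> \<gamma>) E i" and cp: "chom E (Cmod \<eta>) p"
    and inj: "inj i" and sp: "surj p" and rng: "range i = {x. p x = 0}"
    using ext unfolding is_ext_def by auto
  have smr: "\<And>a x y. smul E a (x + y) = smul E a x + smul E a y"
    and sml: "\<And>a b x. smul E (a + b) x = smul E a x + smul E b x"
    and sma: "\<And>a b x. smul E a (smul E b x) = smul E (a * b) x"
    using cm unfolding conf_module_def vec_space_def by auto
  have dadd: "\<And>x y. dop E (x + y) = dop E x + dop E y"
    and dsm: "\<And>a x. dop E (smul E a x) = smul E a (dop E x)"
    and ladd: "\<And>X l x y. lact E X l (x + y) = lact E X l x + lact E X l y"
    and lsm: "\<And>X l a x. lact E X l (smul E a x) = smul E a (lact E X l x)"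
    and dax: "\<And>X l w. lact E X l (dop E w) = dop E (lact E X l w) + smul E l (lact E X l w)"
    using cm unfolding conf_module_def clin_def by auto
  have iadd: "\<And>x y. i (x + y) = i x + i y" and ism: "\<And>a x. i (smult a x) = smul E a (i x)"
    and idop: "\<And>x. i (pCons 0 x) = dop E (i x)"
    and il: "\<And>X l x. i (lact (Mmod \<alpha> \<beta> \<gamma>) X l x) = lact E X l (i x)"
    using ci unfolding chom_def clin_def by (auto simp: Mmod_def)
  have padd: "\<And>x y. p (x + y) = p x + p y" and psm: "\<And>a x. p (smul E a x) = a * p x"
    and pdop: "\<And>x. p (dop E x) = \<eta> * p x" and pl: "\<And>X l x. p (lact E X l x) = 0"
    using cp unfolding chom_def clin_def by (auto simp: Cmod_def)
  have smr_diff: "\<And>a x y. smul E a (x - y) = smul E a x - smul E a y"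
    by (rule add_diff_hom) (rule smr)
  have sml0: "\<And>x. smul E 0 x = 0"
  proof -
    fix x have "smul E (0 + 0) x = smul E 0 x + smul E 0 x" by (rule sml)
    thus "smul E 0 x = 0" by simp
  qed
  have sml_diff: "\<And>a b x. smul E (a - b) x = smul E a x - smul E b x"
    by (metis add_diff_cancel_right' sml eq_diff_eq)
  have ddiff: "\<And>x y. dop E (x - y) = dop E x - dop E y" by (rule add_diff_hom) (rule dadd)
  have ldiff: "\<And>X l x y. lact E X l (x - y) = lact E X l x - lact E X l y"
    by (rule add_diff_hom) (rule ladd)
  have idiff: "\<And>x y. i (x - y) = i x - i y" by (rule add_diff_hom) (rule iadd)
  have i0: "i 0 = 0" by (rule add_zero_hom) (rule iadd)
  have pdiff: "\<And>x y. p (x - y) = p x - p y" by (rule add_diff_hom) (rule padd)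
  have pi: "\<And>x. p (i x) = 0" using rng by auto
  have ker: "\<And>e. p e = 0 \<Longrightarrow> i (inv i e) = e"
    by (metis (mono_tags, lifting) f_inv_into_f mem_Collect_eq rng)
  obtain c where pc: "p c = 1" using sp by (metis surjD)
  define f where "f = inv i (dop E c - smul E \<eta> c)"
  have if_: "i f = dop E c - smul E \<eta> c"
    unfolding f_def by (rule ker) (simp add: pdiff pdop psm pc)
  define k where "k = poly f \<eta>"
  define q where "q = synthetic_div f \<eta>"
  have fq: "f - pCons 0 q + smult \<eta> q = [:k:]"
  proof -
    have "[:-\<eta>, 1:] * q + [:k:] = f" unfolding q_def k_def by (rule synthetic_div_correct')
    thus ?thesis by (auto simp: poly_eq_poly_eq_iff[symmetric] fun_eq_iff algebra_simps)
  qed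
  define c' where "c' = c - i q"
  have pc': "p c' = 1" by (simp add: c'_def pdiff pi pc)
  have dc': "dop E c' = smul E \<eta> c' + i [:k:]"
  proof -
    have "i [:k:] = i f - i (pCons 0 q) + i (smult \<eta> q)" by (simp add: fq[symmetric] idiff iadd)
    also have "\<dots> = dop E c - smul E \<eta> c - dop E (i q) + smul E \<eta> (i q)"
      by (simp add: if_ idop ism)
    finally show ?thesis by (simp add: c'_def ddiff smr_diff algebra_simps)
  qed
  have gen: "\<And>X l. \<exists>g. i g = lact E X l c' \<and> [:l - \<eta>, 1:] * g = lact (Mmod \<alpha> \<beta> \<gamma>) X l [:k:]"
  proof -
    fix X l
    define g where "g = inv i (lact E X l c')"
    have ig: "i g = lact E X l c'" unfolding g_def by (rule ker) (simp add: pl)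
    have "i (smult \<eta> g + lact (Mmod \<alpha> \<beta> \<gamma>) X l [:k:]) = i (pCons 0 g + smult l g)"
      using dax[of X l c'] by (simp add: iadd ism idop il ig dc' ladd lsm)
    hence "smult \<eta> g + lact (Mmod \<alpha> \<beta> \<gamma>) X l [:k:] = pCons 0 g + smult l g"
      using inj by (simp add: inj_eq)
    hence eq: "[:l - \<eta>, 1:] * g = lact (Mmod \<alpha> \<beta> \<gamma>) X l [:k:]"
      by (auto simp: poly_eq_poly_eq_iff[symmetric] fun_eq_iff algebra_simps)
    thus "\<exists>g. i g = lact E X l c' \<and> [:l - \<eta>, 1:] * g = lact (Mmod \<alpha> \<beta> \<gamma>) X l [:k:]"
      using ig by blast
  qed
  have cond: "\<And>t. k * (\<alpha> * t + \<beta> + \<eta> - t) = 0"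
  proof -
    fix t
    obtain g where "[:t - \<eta>, 1:] * g = lact (Mmod \<alpha> \<beta> \<gamma>) Lg t [:k:]" using gen by blast
    from lin_fact[OF this] show "k * (\<alpha> * t + \<beta> + \<eta> - t) = 0"
      by (simp add: Mmod_def algebra_simps)
  qed
  have condY: "\<gamma> * k = 0"
  proof -
    obtain g where "[:0 - \<eta>, 1:] * g = lact (Mmod \<alpha> \<beta> \<gamma>) Yg 0 [:k:]" using gen by blast
    from lin_fact[OF this] show ?thesis by (simp add: Mmod_def algebra_simps)
  qed
  have kc: "k \<noteq> 0 \<longrightarrow> \<alpha> = 1 \<and> \<beta> + \<eta> = 0 \<and> \<gamma> = 0"
  proof
    assume k0: "k \<noteq> 0"
    have a: "\<beta> + \<eta> = 0" using cond[of 0] k0 by simp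
    have "\<alpha> + \<beta> + \<eta> - 1 = 0" using cond[of 1] k0 by simp
    with a condY k0 show "\<alpha> = 1 \<and> \<beta> + \<eta> = 0 \<and> \<gamma> = 0" by (simp add: algebra_simps)
  qed
  have nz: "\<And>l. [:l - \<eta>, 1:] \<noteq> (0 :: complex poly)" by simp
  have act: "\<And>X l. lact E X l c' = i (Gk k X)"
  proof -
    fix X l
    obtain g where ig: "i g = lact E X l c'" and eq: "[:l - \<eta>, 1:] * g = lact (Mmod \<alpha> \<beta> \<gamma>) X l [:k:]"
      using gen by blast
    show "lact E X l c' = i (Gk k X)"
    proof (cases X)
      case Lg
      have e: "[:l - \<eta>, 1:] * g = [:k:] * [:\<alpha> * l + \<beta>, 1:]" using eq by (simp add: Lg Mmod_def)
      have gk: "g = [:k:]"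
      proof (cases "k = 0")
        case True
        from e True have "[:l - \<eta>, 1:] * g = 0" by (simp only: pCons_0_0 mult_zero_left)
        with nz True show ?thesis by (metis mult_eq_0_iff pCons_0_0)
      next
        case False
        with kc have "\<alpha> = 1" "\<beta> = - \<eta>" by (auto simp: eq_neg_iff_add_eq_0)
        hence "[:l - \<eta>, 1:] * g = [:l - \<eta>, 1:] * [:k:]" using e by (simp add: mult.commute)
        thus ?thesis using nz by (simp only: mult_cancel_left) simp
      qed
      thus ?thesis using ig by (simp add: Lg Gk_def)
    next
      case Yg
      have e: "[:l - \<eta>, 1:] * g = [:\<gamma> * k:]" using eq by (simp add: Yg Mmod_def)
      hence "[:l - \<eta>, 1:] * g = 0" using condY by (simp only: pCons_0_0)
      hence "g = 0" using nz by (metis mult_eq_0_iff)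
      thus ?thesis using ig i0 by (simp add: Gk_def Yg)
    next
      case Mg
      have "[:l - \<eta>, 1:] * g = 0" using eq by (simp add: Mg Mmod_def)
      hence "g = 0" using nz by (metis mult_eq_0_iff)
      thus ?thesis using ig i0 by (simp add: Gk_def Mg)
    qed
  qed
  define r where "r e = inv i (e - smul E (p e) c')" for e
  have ri: "\<And>e. i (r e) = e - smul E (p e) c'"
    unfolding r_def by (rule ker) (simp add: pdiff psm pc')
  have r_eq: "\<And>e t. i t = e - smul E (p e) c' \<Longrightarrow> r e = t"
    using ri inj by (metis injD)
  define \<phi> where "\<phi> e = (r e, p e)" for e
  have ch: "chom E (Ek \<alpha> \<beta> \<gamma> \<eta> k) \<phi>"
    unfolding chom_def clin_def
  proof (intro conjI allI)
    fix x y
    have "r (x + y) = r x + r y"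
      by (rule r_eq) (simp add: iadd ri padd sml algebra_simps)
    thus "\<phi> (x + y) = \<phi> x + \<phi> y" by (simp add: \<phi>_def padd)
  next
    fix a x
    have "r (smul E a x) = smult a (r x)"
      by (rule r_eq) (simp add: ism ri psm smr_diff sma)
    thus "\<phi> (smul E a x) = smul (Ek \<alpha> \<beta> \<gamma> \<eta> k) a (\<phi> x)" by (simp add: \<phi>_def psm Ek_smul_form)
  next
    fix w
    have "r (dop E w) = pCons 0 (r w) + smult (p w) [:k:]"
    proof (rule r_eq)
      have "i (pCons 0 (r w) + smult (p w) [:k:]) = dop E (w - smul E (p w) c') + smul E (p w) (i [:k:])"
        by (simp only: iadd idop ism ri)
      also have "\<dots> = dop E w - smul E (\<eta> * p w) c'"
        by (simp add: ddiff dsm dc' smr sma mult.commute)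
      finally show "i (pCons 0 (r w) + smult (p w) [:k:]) = dop E w - smul E (p (dop E w)) c'"
        by (simp add: pdop)
    qed
    thus "\<phi> (dop E w) = dop (Ek \<alpha> \<beta> \<gamma> \<eta> k) (\<phi> w)" by (simp add: \<phi>_def pdop Ek_dop_form)
  next
    fix X l w
    have "r (lact E X l w) = lact (Mmod \<alpha> \<beta> \<gamma>) X l (r w) + smult (p w) (Gk k X)"
    proof (rule r_eq)
      have "i (lact (Mmod \<alpha> \<beta> \<gamma>) X l (r w) + smult (p w) (Gk k X)) =
            lact E X l (w - smul E (p w) c') + smul E (p w) (lact E X l c')"
        by (simp add: iadd il ism ri act)
      also have "\<dots> = lact E X l w" by (simp add: ldiff lsm)
      finally show "i (lact (Mmod \<alpha> \<beta> \<gamma>) X l (r w) + smult (p w) (Gk k X)) = lact E X l w - smul E (p (lact E X l w)) c'"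
        by (simp add: pl sml0)
    qed
    thus "\<phi> (lact E X l w) = lact (Ek \<alpha> \<beta> \<gamma> \<eta> k) X l (\<phi> w)" by (simp add: \<phi>_def pl Ek_lact_form)
  qed
  have "\<And>x. \<phi> (i x) = incl x"
  proof -
    fix x
    have "r (i x) = x" by (rule r_eq) (simp add: pi sml0)
    thus "\<phi> (i x) = incl x" by (simp add: \<phi>_def pi incl_def)
  qed
  moreover have "\<And>y. snd (\<phi> y) = p y" by (simp add: \<phi>_def)
  ultimately have "ext_equiv E i p (Ek \<alpha> \<beta> \<gamma> \<eta> k) incl snd"
    unfolding ext_equiv_def using ch by blast
  thus ?thesis using kc by blast
qed

lemma triv_iff: "trivial_ext (Mmod \<alpha> \<beta> \<gamma>) (Cmod \<eta>) E i p \<longleftrightarrow> ext_equiv E i p (Ek \<alpha> \<beta> \<gamma> \<eta> 0) incl snd"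
  unfolding trivial_ext_def Ek0 incl_eq ..

lemma part:
  fixes br :: bracket
  assumes hLL: "\<And>l n. br Lg Lg l n Lg = - n + 2 * l"
    and h0: "\<And>X Z l n. (X, Z) \<noteq> (Lg, Lg) \<Longrightarrow> br X Z l n Lg = 0"
    and cnd: "cnd \<longleftrightarrow> \<beta> + \<eta> = 0 \<and> \<alpha> = 1 \<and> \<gamma> = 0"
  shows
   "(\<forall>(E::'e::ab_group_add cmod) i p.
          is_ext br (Mmod \<alpha> \<beta> \<gamma>) (Cmod \<eta>) E i p \<and>
          \<not> trivial_ext (Mmod \<alpha> \<beta> \<gamma>) (Cmod \<eta>) E i p \<longrightarrow> cnd) \<and>
      (cnd \<longrightarrow>
          (\<exists>(E::(complex poly \<times> complex) cmod) i p.
             is_ext br (Mmod \<alpha> \<beta> \<gamma>) (Cmod \<eta>) E i p \<and>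
             \<not> trivial_ext (Mmod \<alpha> \<beta> \<gamma>) (Cmod \<eta>) E i p)) \<and>
      (cnd \<longrightarrow>
          (\<forall>k. k \<noteq> 0 \<longrightarrow>
             is_ext br (Mmod \<alpha> \<beta> \<gamma>) (Cmod \<eta>) (Ek \<alpha> \<beta> \<gamma> \<eta> k) incl snd \<and>
             \<not> trivial_ext (Mmod \<alpha> \<beta> \<gamma>) (Cmod \<eta>) (Ek \<alpha> \<beta> \<gamma> \<eta> k) incl snd) \<and>
          (\<forall>(E::'e cmod) i p. is_ext br (Mmod \<alpha> \<beta> \<gamma>) (Cmod \<eta>) E i p \<longrightarrow>
             (\<exists>k. ext_equiv E i p (Ek \<alpha> \<beta> \<gamma> \<eta> k) incl snd)) \<and>
          (\<forall>(E::'e cmod) i p. is_ext br (Mmod \<alpha> \<beta> \<gamma>) (Cmod \<eta>) E i p \<and>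
             \<not> trivial_ext (Mmod \<alpha> \<beta> \<gamma>) (Cmod \<eta>) E i p \<longrightarrow>
             (\<exists>k. k \<noteq> 0 \<and> ext_equiv E i p (Ek \<alpha> \<beta> \<gamma> \<eta> k) incl snd)) \<and>
          (\<forall>k k'. ext_equiv (Ek \<alpha> \<beta> \<gamma> \<eta> k) incl snd (Ek \<alpha> \<beta> \<gamma> \<eta> k') incl snd \<longrightarrow> k = k'))"
proof -
  have A: "\<beta> + \<eta> = 0 \<and> \<alpha> = 1 \<and> \<gamma> = 0"
    if h1: "is_ext br (Mmod \<alpha> \<beta> \<gamma>) (Cmod \<eta>) (E::'e cmod) i p" and h2: "\<not> trivial_ext (Mmod \<alpha> \<beta> \<gamma>) (Cmod \<eta>) E i p" for E i p
  proof -
    obtain k where k: "ext_equiv E i p (Ek \<alpha> \<beta> \<gamma> \<eta> k) incl snd" "k \<noteq> 0 \<longrightarrow> \<alpha> = 1 \<and> \<beta> + \<eta> = 0 \<and> \<gamma> = 0"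
      using main[OF h1] by blast
    have "k \<noteq> 0" using k(1) h2 triv_iff by metis
    thus ?thesis using k(2) by simp
  qed
  have B: "is_ext br (Mmod \<alpha> \<beta> \<gamma>) (Cmod \<eta>) (Ek \<alpha> \<beta> \<gamma> \<eta> k) incl snd \<and>
             \<not> trivial_ext (Mmod \<alpha> \<beta> \<gamma>) (Cmod \<eta>) (Ek \<alpha> \<beta> \<gamma> \<eta> k) incl snd"
    if c: "\<beta> + \<eta> = 0 \<and> \<alpha> = 1 \<and> \<gamma> = 0" and k: "k \<noteq> 0" for k
  proof
    have "\<eta> = - \<beta>" using c by (simp add: eq_neg_iff_add_eq_0 add.commute)
    thus "is_ext br (Mmod \<alpha> \<beta> \<gamma>) (Cmod \<eta>) (Ek \<alpha> \<beta> \<gamma> \<eta> k) incl snd"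
      using Ek_ext[of br \<beta> k, OF hLL h0] c by simp
    show "\<not> trivial_ext (Mmod \<alpha> \<beta> \<gamma>) (Cmod \<eta>) (Ek \<alpha> \<beta> \<gamma> \<eta> k) incl snd"
      using triv_iff Ek_uniq k by metis
  qed
  have C: "\<exists>k. k \<noteq> 0 \<and> ext_equiv E i p (Ek \<alpha> \<beta> \<gamma> \<eta> k) incl snd"
    if h1: "is_ext br (Mmod \<alpha> \<beta> \<gamma>) (Cmod \<eta>) (E::'e cmod) i p" and h2: "\<not> trivial_ext (Mmod \<alpha> \<beta> \<gamma>) (Cmod \<eta>) E i p" for E i p
  proof -
    obtain k where k: "ext_equiv E i p (Ek \<alpha> \<beta> \<gamma> \<eta> k) incl snd"
      using main[OF h1] by blast
    have "k \<noteq> 0" using k h2 triv_iff by metis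
    thus ?thesis using k by blast
  qed
  show ?thesis
  proof (intro conjI impI allI)
    show "\<exists>(E::(complex poly \<times> complex) cmod) i p.
             is_ext br (Mmod \<alpha> \<beta> \<gamma>) (Cmod \<eta>) E i p \<and>
             \<not> trivial_ext (Mmod \<alpha> \<beta> \<gamma>) (Cmod \<eta>) E i p"
      if "cnd" using B[OF that[unfolded cnd] one_neq_zero] by blast
    show "\<exists>k. ext_equiv E i p (Ek \<alpha> \<beta> \<gamma> \<eta> k) incl snd"
      if "is_ext br (Mmod \<alpha> \<beta> \<gamma>) (Cmod \<eta>) (E::'e cmod) i p" for E i p
      using main[OF that] by blast
    show "\<exists>k. k \<noteq> 0 \<and> ext_equiv E i p (Ek \<alpha> \<beta> \<gamma> \<eta> k) incl snd"
      if "is_ext br (Mmod \<alpha> \<beta> \<gamma>) (Cmod \<eta>) (E::'e cmod) i p \<and> \<not> trivial_ext (Mmod \<alpha> \<beta> \<gamma>) (Cmod \<eta>) E i p" for E i p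
      using C that by blast
    show "k = k'" if "ext_equiv (Ek \<alpha> \<beta> \<gamma> \<eta> k) incl snd (Ek \<alpha> \<beta> \<gamma> \<eta> k') incl snd" for k k'
      using Ek_uniq[OF that] .
  qed (use A B cnd in blast)+
qed

theorem theorem4p6:
  fixes \<alpha> \<beta> \<eta> :: complex
  shows
  \<comment> \<open>(1)(i): TSV(a,b), (a,b) \<noteq> (1,0), alpha \<noteq> 0, modules M_{alpha,beta}\<close>
  "(\<forall>a b. (a, b) \<noteq> (1, 0) \<longrightarrow> \<alpha> \<noteq> 0 \<longrightarrow>
      (\<forall>(E::'e::ab_group_add cmod) i p.
          is_ext (TSV_ab a b) (Mmod \<alpha> \<beta> 0) (Cmod \<eta>) E i p \<and>
          \<not> trivial_ext (Mmod \<alpha> \<beta> 0) (Cmod \<eta>) E i p \<longrightarrow> \<beta> + \<eta> = 0 \<and> \<alpha> = 1) \<and>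
      (\<beta> + \<eta> = 0 \<and> \<alpha> = 1 \<longrightarrow>
          (\<exists>(E::(complex poly \<times> complex) cmod) i p.
             is_ext (TSV_ab a b) (Mmod \<alpha> \<beta> 0) (Cmod \<eta>) E i p \<and>
             \<not> trivial_ext (Mmod \<alpha> \<beta> 0) (Cmod \<eta>) E i p)) \<and>
      (\<beta> + \<eta> = 0 \<and> \<alpha> = 1 \<longrightarrow>
          (\<forall>k. k \<noteq> 0 \<longrightarrow>
             is_ext (TSV_ab a b) (Mmod \<alpha> \<beta> 0) (Cmod \<eta>) (Ek \<alpha> \<beta> 0 \<eta> k) incl snd \<and>
             \<not> trivial_ext (Mmod \<alpha> \<beta> 0) (Cmod \<eta>) (Ek \<alpha> \<beta> 0 \<eta> k) incl snd) \<and>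
          (\<forall>(E::'e cmod) i p. is_ext (TSV_ab a b) (Mmod \<alpha> \<beta> 0) (Cmod \<eta>) E i p \<longrightarrow>
             (\<exists>k. ext_equiv E i p (Ek \<alpha> \<beta> 0 \<eta> k) incl snd)) \<and>
          (\<forall>(E::'e cmod) i p. is_ext (TSV_ab a b) (Mmod \<alpha> \<beta> 0) (Cmod \<eta>) E i p \<and>
             \<not> trivial_ext (Mmod \<alpha> \<beta> 0) (Cmod \<eta>) E i p \<longrightarrow>
             (\<exists>k. k \<noteq> 0 \<and> ext_equiv E i p (Ek \<alpha> \<beta> 0 \<eta> k) incl snd)) \<and>
          (\<forall>k k'. ext_equiv (Ek \<alpha> \<beta> 0 \<eta> k) incl snd (Ek \<alpha> \<beta> 0 \<eta> k') incl snd \<longrightarrow> k = k')))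
   \<and>
   (\<forall>\<gamma>. (\<alpha>, \<gamma>) \<noteq> (0, 0) \<longrightarrow>
      (\<forall>(E::'e cmod) i p.
          is_ext (TSV_ab 1 0) (Mmod \<alpha> \<beta> \<gamma>) (Cmod \<eta>) E i p \<and>
          \<not> trivial_ext (Mmod \<alpha> \<beta> \<gamma>) (Cmod \<eta>) E i p \<longrightarrow> \<beta> + \<eta> = 0 \<and> (\<alpha>, \<gamma>) = (1, 0)) \<and>
      (\<beta> + \<eta> = 0 \<and> (\<alpha>, \<gamma>) = (1, 0) \<longrightarrow>
          (\<exists>(E::(complex poly \<times> complex) cmod) i p.
             is_ext (TSV_ab 1 0) (Mmod \<alpha> \<beta> \<gamma>) (Cmod \<eta>) E i p \<and>
             \<not> trivial_ext (Mmod \<alpha> \<beta> \<gamma>) (Cmod \<eta>) E i p)) \<and>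
      (\<beta> + \<eta> = 0 \<and> (\<alpha>, \<gamma>) = (1, 0) \<longrightarrow>
          (\<forall>k. k \<noteq> 0 \<longrightarrow>
             is_ext (TSV_ab 1 0) (Mmod \<alpha> \<beta> \<gamma>) (Cmod \<eta>) (Ek \<alpha> \<beta> \<gamma> \<eta> k) incl snd \<and>
             \<not> trivial_ext (Mmod \<alpha> \<beta> \<gamma>) (Cmod \<eta>) (Ek \<alpha> \<beta> \<gamma> \<eta> k) incl snd) \<and>
          (\<forall>(E::'e cmod) i p. is_ext (TSV_ab 1 0) (Mmod \<alpha> \<beta> \<gamma>) (Cmod \<eta>) E i p \<longrightarrow>
             (\<exists>k. ext_equiv E i p (Ek \<alpha> \<beta> \<gamma> \<eta> k) incl snd)) \<and>
          (\<forall>(E::'e cmod) i p. is_ext (TSV_ab 1 0) (Mmod \<alpha> \<beta> \<gamma>) (Cmod \<eta>) E i p \<and>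
             \<not> trivial_ext (Mmod \<alpha> \<beta> \<gamma>) (Cmod \<eta>) E i p \<longrightarrow>
             (\<exists>k. k \<noteq> 0 \<and> ext_equiv E i p (Ek \<alpha> \<beta> \<gamma> \<eta> k) incl snd)) \<and>
          (\<forall>k k'. ext_equiv (Ek \<alpha> \<beta> \<gamma> \<eta> k) incl snd (Ek \<alpha> \<beta> \<gamma> \<eta> k') incl snd \<longrightarrow> k = k')))
   \<and>
   (\<forall>c. \<alpha> \<noteq> 0 \<longrightarrow>
      (\<forall>(E::'e cmod) i p.
          is_ext (TSV_c c) (Mmod \<alpha> \<beta> 0) (Cmod \<eta>) E i p \<and>
          \<not> trivial_ext (Mmod \<alpha> \<beta> 0) (Cmod \<eta>) E i p \<longrightarrow> \<beta> + \<eta> = 0 \<and> \<alpha> = 1) \<and>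
      (\<beta> + \<eta> = 0 \<and> \<alpha> = 1 \<longrightarrow>
          (\<exists>(E::(complex poly \<times> complex) cmod) i p.
             is_ext (TSV_c c) (Mmod \<alpha> \<beta> 0) (Cmod \<eta>) E i p \<and>
             \<not> trivial_ext (Mmod \<alpha> \<beta> 0) (Cmod \<eta>) E i p)) \<and>
      (\<beta> + \<eta> = 0 \<and> \<alpha> = 1 \<longrightarrow>
          (\<forall>k. k \<noteq> 0 \<longrightarrow>
             is_ext (TSV_c c) (Mmod \<alpha> \<beta> 0) (Cmod \<eta>) (Ek \<alpha> \<beta> 0 \<eta> k) incl snd \<and>
             \<not> trivial_ext (Mmod \<alpha> \<beta> 0) (Cmod \<eta>) (Ek \<alpha> \<beta> 0 \<eta> k) incl snd) \<and>
          (\<forall>(E::'e cmod) i p. is_ext (TSV_c c) (Mmod \<alpha> \<beta> 0) (Cmod \<eta>) E i p \<longrightarrow>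
             (\<exists>k. ext_equiv E i p (Ek \<alpha> \<beta> 0 \<eta> k) incl snd)) \<and>
          (\<forall>(E::'e cmod) i p. is_ext (TSV_c c) (Mmod \<alpha> \<beta> 0) (Cmod \<eta>) E i p \<and>
             \<not> trivial_ext (Mmod \<alpha> \<beta> 0) (Cmod \<eta>) E i p \<longrightarrow>
             (\<exists>k. k \<noteq> 0 \<and> ext_equiv E i p (Ek \<alpha> \<beta> 0 \<eta> k) incl snd)) \<and>
          (\<forall>k k'. ext_equiv (Ek \<alpha> \<beta> 0 \<eta> k) incl snd (Ek \<alpha> \<beta> 0 \<eta> k') incl snd \<longrightarrow> k = k')))"
proof -
  have C0: "(\<forall>a b. (a, b) \<noteq> (1, 0) \<longrightarrow> \<alpha> \<noteq> 0 \<longrightarrow>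
      (\<forall>(E::'e::ab_group_add cmod) i p.
          is_ext (TSV_ab a b) (Mmod \<alpha> \<beta> 0) (Cmod \<eta>) E i p \<and>
          \<not> trivial_ext (Mmod \<alpha> \<beta> 0) (Cmod \<eta>) E i p \<longrightarrow> \<beta> + \<eta> = 0 \<and> \<alpha> = 1) \<and>
      (\<beta> + \<eta> = 0 \<and> \<alpha> = 1 \<longrightarrow>
          (\<exists>(E::(complex poly \<times> complex) cmod) i p.
             is_ext (TSV_ab a b) (Mmod \<alpha> \<beta> 0) (Cmod \<eta>) E i p \<and>
             \<not> trivial_ext (Mmod \<alpha> \<beta> 0) (Cmod \<eta>) E i p)) \<and>
      (\<beta> + \<eta> = 0 \<and> \<alpha> = 1 \<longrightarrow>
          (\<forall>k. k \<noteq> 0 \<longrightarrow>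
             is_ext (TSV_ab a b) (Mmod \<alpha> \<beta> 0) (Cmod \<eta>) (Ek \<alpha> \<beta> 0 \<eta> k) incl snd \<and>
             \<not> trivial_ext (Mmod \<alpha> \<beta> 0) (Cmod \<eta>) (Ek \<alpha> \<beta> 0 \<eta> k) incl snd) \<and>
          (\<forall>(E::'e cmod) i p. is_ext (TSV_ab a b) (Mmod \<alpha> \<beta> 0) (Cmod \<eta>) E i p \<longrightarrow>
             (\<exists>k. ext_equiv E i p (Ek \<alpha> \<beta> 0 \<eta> k) incl snd)) \<and>
          (\<forall>(E::'e cmod) i p. is_ext (TSV_ab a b) (Mmod \<alpha> \<beta> 0) (Cmod \<eta>) E i p \<and>
             \<not> trivial_ext (Mmod \<alpha> \<beta> 0) (Cmod \<eta>) E i p \<longrightarrow>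
             (\<exists>k. k \<noteq> 0 \<and> ext_equiv E i p (Ek \<alpha> \<beta> 0 \<eta> k) incl snd)) \<and>
          (\<forall>k k'. ext_equiv (Ek \<alpha> \<beta> 0 \<eta> k) incl snd (Ek \<alpha> \<beta> 0 \<eta> k') incl snd \<longrightarrow> k = k')))"
  proof (intro allI impI)
    fix a b :: complex
    have cd: "(\<beta> + \<eta> = 0 \<and> \<alpha> = 1) \<longleftrightarrow> \<beta> + \<eta> = 0 \<and> \<alpha> = 1 \<and> (0::complex) = 0" by simp
    note P = part[where 'e='e and br="TSV_ab a b" and \<gamma>=0, OF brab(1) brab(2) cd]
    show "(\<forall>(E::'e::ab_group_add cmod) i p.
          is_ext (TSV_ab a b) (Mmod \<alpha> \<beta> 0) (Cmod \<eta>) E i p \<and>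
          \<not> trivial_ext (Mmod \<alpha> \<beta> 0) (Cmod \<eta>) E i p \<longrightarrow> \<beta> + \<eta> = 0 \<and> \<alpha> = 1) \<and>
      (\<beta> + \<eta> = 0 \<and> \<alpha> = 1 \<longrightarrow>
          (\<exists>(E::(complex poly \<times> complex) cmod) i p.
             is_ext (TSV_ab a b) (Mmod \<alpha> \<beta> 0) (Cmod \<eta>) E i p \<and>
             \<not> trivial_ext (Mmod \<alpha> \<beta> 0) (Cmod \<eta>) E i p)) \<and>
      (\<beta> + \<eta> = 0 \<and> \<alpha> = 1 \<longrightarrow>
          (\<forall>k. k \<noteq> 0 \<longrightarrow>
             is_ext (TSV_ab a b) (Mmod \<alpha> \<beta> 0) (Cmod \<eta>) (Ek \<alpha> \<beta> 0 \<eta> k) incl snd \<and>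
             \<not> trivial_ext (Mmod \<alpha> \<beta> 0) (Cmod \<eta>) (Ek \<alpha> \<beta> 0 \<eta> k) incl snd) \<and>
          (\<forall>(E::'e cmod) i p. is_ext (TSV_ab a b) (Mmod \<alpha> \<beta> 0) (Cmod \<eta>) E i p \<longrightarrow>
             (\<exists>k. ext_equiv E i p (Ek \<alpha> \<beta> 0 \<eta> k) incl snd)) \<and>
          (\<forall>(E::'e cmod) i p. is_ext (TSV_ab a b) (Mmod \<alpha> \<beta> 0) (Cmod \<eta>) E i p \<and>
             \<not> trivial_ext (Mmod \<alpha> \<beta> 0) (Cmod \<eta>) E i p \<longrightarrow>
             (\<exists>k. k \<noteq> 0 \<and> ext_equiv E i p (Ek \<alpha> \<beta> 0 \<eta> k) incl snd)) \<and>
          (\<forall>k k'. ext_equiv (Ek \<alpha> \<beta> 0 \<eta> k) incl snd (Ek \<alpha> \<beta> 0 \<eta> k') incl snd \<longrightarrow> k = k'))"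
      using P .
  qed
  have C1: "(\<forall>\<gamma>. (\<alpha>, \<gamma>) \<noteq> (0, 0) \<longrightarrow>
      (\<forall>(E::'e cmod) i p.
          is_ext (TSV_ab 1 0) (Mmod \<alpha> \<beta> \<gamma>) (Cmod \<eta>) E i p \<and>
          \<not> trivial_ext (Mmod \<alpha> \<beta> \<gamma>) (Cmod \<eta>) E i p \<longrightarrow> \<beta> + \<eta> = 0 \<and> (\<alpha>, \<gamma>) = (1, 0)) \<and>
      (\<beta> + \<eta> = 0 \<and> (\<alpha>, \<gamma>) = (1, 0) \<longrightarrow>
          (\<exists>(E::(complex poly \<times> complex) cmod) i p.
             is_ext (TSV_ab 1 0) (Mmod \<alpha> \<beta> \<gamma>) (Cmod \<eta>) E i p \<and>
             \<not> trivial_ext (Mmod \<alpha> \<beta> \<gamma>) (Cmod \<eta>) E i p)) \<and>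
      (\<beta> + \<eta> = 0 \<and> (\<alpha>, \<gamma>) = (1, 0) \<longrightarrow>
          (\<forall>k. k \<noteq> 0 \<longrightarrow>
             is_ext (TSV_ab 1 0) (Mmod \<alpha> \<beta> \<gamma>) (Cmod \<eta>) (Ek \<alpha> \<beta> \<gamma> \<eta> k) incl snd \<and>
             \<not> trivial_ext (Mmod \<alpha> \<beta> \<gamma>) (Cmod \<eta>) (Ek \<alpha> \<beta> \<gamma> \<eta> k) incl snd) \<and>
          (\<forall>(E::'e cmod) i p. is_ext (TSV_ab 1 0) (Mmod \<alpha> \<beta> \<gamma>) (Cmod \<eta>) E i p \<longrightarrow>
             (\<exists>k. ext_equiv E i p (Ek \<alpha> \<beta> \<gamma> \<eta> k) incl snd)) \<and>
          (\<forall>(E::'e cmod) i p. is_ext (TSV_ab 1 0) (Mmod \<alpha> \<beta> \<gamma>) (Cmod \<eta>) E i p \<and>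
             \<not> trivial_ext (Mmod \<alpha> \<beta> \<gamma>) (Cmod \<eta>) E i p \<longrightarrow>
             (\<exists>k. k \<noteq> 0 \<and> ext_equiv E i p (Ek \<alpha> \<beta> \<gamma> \<eta> k) incl snd)) \<and>
          (\<forall>k k'. ext_equiv (Ek \<alpha> \<beta> \<gamma> \<eta> k) incl snd (Ek \<alpha> \<beta> \<gamma> \<eta> k') incl snd \<longrightarrow> k = k')))"
  proof (intro allI impI)
    fix \<gamma> :: complex
    have cd: "(\<beta> + \<eta> = 0 \<and> (\<alpha>, \<gamma>) = (1, 0)) \<longleftrightarrow> \<beta> + \<eta> = 0 \<and> \<alpha> = 1 \<and> \<gamma> = 0" by simp
    note P = part[where 'e='e and br="TSV_ab 1 0" and \<alpha>=\<alpha> and \<beta>=\<beta> and \<gamma>=\<gamma> and \<eta>=\<eta> and cnd="\<beta> + \<eta> = 0 \<and> (\<alpha>, \<gamma>) = (1, 0)", OF brab(1)[of 1 0] brab(2)[of _ _ 1 0] cd]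
    show "(\<forall>(E::'e cmod) i p.
          is_ext (TSV_ab 1 0) (Mmod \<alpha> \<beta> \<gamma>) (Cmod \<eta>) E i p \<and>
          \<not> trivial_ext (Mmod \<alpha> \<beta> \<gamma>) (Cmod \<eta>) E i p \<longrightarrow> \<beta> + \<eta> = 0 \<and> (\<alpha>, \<gamma>) = (1, 0)) \<and>
      (\<beta> + \<eta> = 0 \<and> (\<alpha>, \<gamma>) = (1, 0) \<longrightarrow>
          (\<exists>(E::(complex poly \<times> complex) cmod) i p.
             is_ext (TSV_ab 1 0) (Mmod \<alpha> \<beta> \<gamma>) (Cmod \<eta>) E i p \<and>
             \<not> trivial_ext (Mmod \<alpha> \<beta> \<gamma>) (Cmod \<eta>) E i p)) \<and>
      (\<beta> + \<eta> = 0 \<and> (\<alpha>, \<gamma>) = (1, 0) \<longrightarrow>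
          (\<forall>k. k \<noteq> 0 \<longrightarrow>
             is_ext (TSV_ab 1 0) (Mmod \<alpha> \<beta> \<gamma>) (Cmod \<eta>) (Ek \<alpha> \<beta> \<gamma> \<eta> k) incl snd \<and>
             \<not> trivial_ext (Mmod \<alpha> \<beta> \<gamma>) (Cmod \<eta>) (Ek \<alpha> \<beta> \<gamma> \<eta> k) incl snd) \<and>
          (\<forall>(E::'e cmod) i p. is_ext (TSV_ab 1 0) (Mmod \<alpha> \<beta> \<gamma>) (Cmod \<eta>) E i p \<longrightarrow>
             (\<exists>k. ext_equiv E i p (Ek \<alpha> \<beta> \<gamma> \<eta> k) incl snd)) \<and>
          (\<forall>(E::'e cmod) i p. is_ext (TSV_ab 1 0) (Mmod \<alpha> \<beta> \<gamma>) (Cmod \<eta>) E i p \<and>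
             \<not> trivial_ext (Mmod \<alpha> \<beta> \<gamma>) (Cmod \<eta>) E i p \<longrightarrow>
             (\<exists>k. k \<noteq> 0 \<and> ext_equiv E i p (Ek \<alpha> \<beta> \<gamma> \<eta> k) incl snd)) \<and>
          (\<forall>k k'. ext_equiv (Ek \<alpha> \<beta> \<gamma> \<eta> k) incl snd (Ek \<alpha> \<beta> \<gamma> \<eta> k') incl snd \<longrightarrow> k = k'))"
      using P .
  qed
  have C2: "(\<forall>c. \<alpha> \<noteq> 0 \<longrightarrow>
      (\<forall>(E::'e cmod) i p.
          is_ext (TSV_c c) (Mmod \<alpha> \<beta> 0) (Cmod \<eta>) E i p \<and>
          \<not> trivial_ext (Mmod \<alpha> \<beta> 0) (Cmod \<eta>) E i p \<longrightarrow> \<beta> + \<eta> = 0 \<and> \<alpha> = 1) \<and>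
      (\<beta> + \<eta> = 0 \<and> \<alpha> = 1 \<longrightarrow>
          (\<exists>(E::(complex poly \<times> complex) cmod) i p.
             is_ext (TSV_c c) (Mmod \<alpha> \<beta> 0) (Cmod \<eta>) E i p \<and>
             \<not> trivial_ext (Mmod \<alpha> \<beta> 0) (Cmod \<eta>) E i p)) \<and>
      (\<beta> + \<eta> = 0 \<and> \<alpha> = 1 \<longrightarrow>
          (\<forall>k. k \<noteq> 0 \<longrightarrow>
             is_ext (TSV_c c) (Mmod \<alpha> \<beta> 0) (Cmod \<eta>) (Ek \<alpha> \<beta> 0 \<eta> k) incl snd \<and>
             \<not> trivial_ext (Mmod \<alpha> \<beta> 0) (Cmod \<eta>) (Ek \<alpha> \<beta> 0 \<eta> k) incl snd) \<and>
          (\<forall>(E::'e cmod) i p. is_ext (TSV_c c) (Mmod \<alpha> \<beta> 0) (Cmod \<eta>) E i p \<longrightarrow>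
             (\<exists>k. ext_equiv E i p (Ek \<alpha> \<beta> 0 \<eta> k) incl snd)) \<and>
          (\<forall>(E::'e cmod) i p. is_ext (TSV_c c) (Mmod \<alpha> \<beta> 0) (Cmod \<eta>) E i p \<and>
             \<not> trivial_ext (Mmod \<alpha> \<beta> 0) (Cmod \<eta>) E i p \<longrightarrow>
             (\<exists>k. k \<noteq> 0 \<and> ext_equiv E i p (Ek \<alpha> \<beta> 0 \<eta> k) incl snd)) \<and>
          (\<forall>k k'. ext_equiv (Ek \<alpha> \<beta> 0 \<eta> k) incl snd (Ek \<alpha> \<beta> 0 \<eta> k') incl snd \<longrightarrow> k = k')))"
  proof (intro allI impI)
    fix c :: complex
    have cd: "(\<beta> + \<eta> = 0 \<and> \<alpha> = 1) \<longleftrightarrow> \<beta> + \<eta> = 0 \<and> \<alpha> = 1 \<and> (0::complex) = 0" by simp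
    note P = part[where 'e='e and br="TSV_c c" and \<gamma>=0, OF brc(1) brc(2) cd]
    show "(\<forall>(E::'e cmod) i p.
          is_ext (TSV_c c) (Mmod \<alpha> \<beta> 0) (Cmod \<eta>) E i p \<and>
          \<not> trivial_ext (Mmod \<alpha> \<beta> 0) (Cmod \<eta>) E i p \<longrightarrow> \<beta> + \<eta> = 0 \<and> \<alpha> = 1) \<and>
      (\<beta> + \<eta> = 0 \<and> \<alpha> = 1 \<longrightarrow>
          (\<exists>(E::(complex poly \<times> complex) cmod) i p.
             is_ext (TSV_c c) (Mmod \<alpha> \<beta> 0) (Cmod \<eta>) E i p \<and>
             \<not> trivial_ext (Mmod \<alpha> \<beta> 0) (Cmod \<eta>) E i p)) \<and>
      (\<beta> + \<eta> = 0 \<and> \<alpha> = 1 \<longrightarrow>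
          (\<forall>k. k \<noteq> 0 \<longrightarrow>
             is_ext (TSV_c c) (Mmod \<alpha> \<beta> 0) (Cmod \<eta>) (Ek \<alpha> \<beta> 0 \<eta> k) incl snd \<and>
             \<not> trivial_ext (Mmod \<alpha> \<beta> 0) (Cmod \<eta>) (Ek \<alpha> \<beta> 0 \<eta> k) incl snd) \<and>
          (\<forall>(E::'e cmod) i p. is_ext (TSV_c c) (Mmod \<alpha> \<beta> 0) (Cmod \<eta>) E i p \<longrightarrow>
             (\<exists>k. ext_equiv E i p (Ek \<alpha> \<beta> 0 \<eta> k) incl snd)) \<and>
          (\<forall>(E::'e cmod) i p. is_ext (TSV_c c) (Mmod \<alpha> \<beta> 0) (Cmod \<eta>) E i p \<and>
             \<not> trivial_ext (Mmod \<alpha> \<beta> 0) (Cmod \<eta>) E i p \<longrightarrow>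
             (\<exists>k. k \<noteq> 0 \<and> ext_equiv E i p (Ek \<alpha> \<beta> 0 \<eta> k) incl snd)) \<and>
          (\<forall>k k'. ext_equiv (Ek \<alpha> \<beta> 0 \<eta> k) incl snd (Ek \<alpha> \<beta> 0 \<eta> k') incl snd \<longrightarrow> k = k'))"
      using P .
  qed
  show ?thesis using C0 C1 C2 by (intro conjI)
qed

end
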